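(* Let $G$ be a group with finite generating set $Y$ and let $\mathscr S$ be a retractive family of subsets of $Y$ relative to $Y$. Suppose $\bigcup\mathscr S=Y$ and the elements of $\mathscr S$ are pairwise incomparable under inclusion. Suppose (i) $[a,b]=1$ whenever $\{a,b\}\subseteq Y$ is transverse to $\mathscr S$, and (ii) $[a,\langle S\rangle^2]=1$ for every $S\in\mathscr S$ and every $a\in Y-S$, where $\langle S\rangle^2$ is the commutator subgroup of the subgroup $\langle S\rangle\cong G_S$. Then $\rho_{\mathscr S}=\prod_{S\in\mathscr S}\rho_S\colon G\to\prod_{S\in\mathscr S}G_S$ is injective.
   Context: Conventions: $[x,y]=x^{-1}y^{-1}xy$. For $S\subseteq Y$, $G_S$ is the quotient of $G$ by the normal closure of $Y-S$, with projection $\rho_S$. $S$ is retractive if $\rho_S$ restricts to an injection on $\langle S\rangle$ (so $\langle S\rangle$ is identified with $G_S$); a retractive family is a family of retractive subsets all of whose intersections are retractive. A subset $T\subseteq Y$ is transverse to $\mathscr S$ if $T\not\subseteq S$ for every $S\in\mathscr S$. *)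

theory Defs
  imports "HOL-Algebra.Algebra"
begin

definition commutator :: "('a, 'b) monoid_scheme \<Rightarrow> 'a \<Rightarrow> 'a \<Rightarrow> 'a" where
  "commutator G x y = inv\<^bsub>G\<^esub> x \<otimes>\<^bsub>G\<^esub> inv\<^bsub>G\<^esub> y \<otimes>\<^bsub>G\<^esub> x \<otimes>\<^bsub>G\<^esub> y"

definition normal_closure :: "('a, 'b) monoid_scheme \<Rightarrow> 'a set \<Rightarrow> 'a set" where
  "normal_closure G A = carrier G \<inter> \<Inter> {N. N \<lhd> G \<and> A \<subseteq> N}"

definition quotG :: "('a, 'b) monoid_scheme \<Rightarrow> 'a set \<Rightarrow> 'a set \<Rightarrow> ('a set) monoid" where
  "quotG G Y S = G Mod (normal_closure G (Y - S))"

definition rhoS :: "('a, 'b) monoid_scheme \<Rightarrow> 'a set \<Rightarrow> 'a set \<Rightarrow> 'a \<Rightarrow> 'a set" where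
  "rhoS G Y S x = normal_closure G (Y - S) #>\<^bsub>G\<^esub> x"

definition retractive :: "('a, 'b) monoid_scheme \<Rightarrow> 'a set \<Rightarrow> 'a set \<Rightarrow> bool" where
  "retractive G Y S \<longleftrightarrow> S \<subseteq> Y \<and> inj_on (rhoS G Y S) (generate G S)"

definition retractive_family :: "('a, 'b) monoid_scheme \<Rightarrow> 'a set \<Rightarrow> 'a set set \<Rightarrow> bool" where
  "retractive_family G Y \<S> \<longleftrightarrow>
     (\<forall>S\<in>\<S>. S \<subseteq> Y) \<and> (\<forall>\<T>. \<T> \<subseteq> \<S> \<and> \<T> \<noteq> {} \<longrightarrow> retractive G Y (\<Inter>\<T>))"

definition transverse :: "'a set \<Rightarrow> 'a set set \<Rightarrow> bool" where
  "transverse T \<S> \<longleftrightarrow> (\<forall>S\<in>\<S>. \<not> T \<subseteq> S)"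

definition rho_family :: "('a, 'b) monoid_scheme \<Rightarrow> 'a set \<Rightarrow> 'a set set \<Rightarrow> 'a \<Rightarrow> 'a set \<Rightarrow> 'a set" where
  "rho_family G Y \<S> x = (\<lambda>S. if S \<in> \<S> then rhoS G Y S x else undefined)"

end

theory Submission
  imports Defs
begin



lemma (in group) nc_normal:
  assumes "A \<subseteq> carrier G"
  shows "normal_closure G A \<lhd> G"
proof -
  let ?N = "{N. N \<lhd> G \<and> A \<subseteq> N}"
  have cin: "carrier G \<in> ?N" using assms normal_self by auto
  have eq: "normal_closure G A = \<Inter>?N"
    unfolding normal_closure_def using cin by blast
  have sg: "subgroup (\<Inter>?N) G"
    by (rule subgroups_Inter) (use cin normal_imp_subgroup in auto)
  show ?thesis unfolding eq
  proof (rule normal_invI[OF sg])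
    fix x h assume x: "x \<in> carrier G" and h: "h \<in> \<Inter>?N"
    show "x \<otimes> h \<otimes> inv x \<in> \<Inter>?N"
    proof
      fix N assume "N \<in> ?N"
      then have "N \<lhd> G" "h \<in> N" using h by auto
      then show "x \<otimes> h \<otimes> inv x \<in> N" using x normal_inv_iff by blast
    qed
  qed
qed

lemma (in group) nc_incl:
  assumes "A \<subseteq> carrier G"
  shows "A \<subseteq> normal_closure G A"
  unfolding normal_closure_def using assms by blast

definition retr :: "('a, 'b) monoid_scheme \<Rightarrow> 'a set \<Rightarrow> 'a set \<Rightarrow> 'a \<Rightarrow> 'a" where
  "retr G Y S x = (THE s. s \<in> generate G S \<and> rhoS G Y S s = rhoS G Y S x)"

locale retr_ctx = group G for G (structure) +
  fixes Y S
  assumes Ysub: "Y \<subseteq> carrier G" and gen: "generate G Y = carrier G"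
    and ret: "retractive G Y S"
begin

abbreviation "N \<equiv> normal_closure G (Y - S)"
abbreviation "H \<equiv> generate G S"

lemma SY: "S \<subseteq> Y" using ret unfolding retractive_def by auto
lemma Scar: "S \<subseteq> carrier G" using SY Ysub by auto
lemma Nn: "N \<lhd> G" by (rule nc_normal) (use Ysub in auto)
lemma Nsg: "subgroup N G" using Nn normal_imp_subgroup by auto
lemma Hsg: "subgroup H G" using generate_is_subgroup Scar by auto
lemma inj: "inj_on (\<lambda>x. N #> x) H"
  using ret unfolding retractive_def rhoS_def by auto

lemma N1: "\<one> \<in> N" using subgroup.one_closed[OF Nsg] .
lemma H1: "\<one> \<in> H" using subgroup.one_closed[OF Hsg] .
lemma YSN: "y \<in> Y \<Longrightarrow> y \<notin> S \<Longrightarrow> y \<in> N"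
  using nc_incl[of "Y - S"] Ysub by auto

lemma decomp:
  assumes "x \<in> carrier G" shows "\<exists>n\<in>N. \<exists>s\<in>H. x = n \<otimes> s"
proof -
  have "x \<in> generate G Y" using assms gen by auto
  then show ?thesis
  proof (induction rule: generate.induct)
    case one
    have "\<one> = \<one> \<otimes> \<one>" by simp
    then show ?case using N1 H1 by blast
  next
    case (incl h)
    have hc: "h \<in> carrier G" using incl Ysub by auto
    show ?case
    proof (cases "h \<in> S")
      case True
      then have "h \<in> H" by (rule generate.incl)
      moreover have "h = \<one> \<otimes> h" using hc by simp
      ultimately show ?thesis using N1 by blast
    next
      case False
      then have "h \<in> N" using YSN incl by auto
      moreover have "h = h \<otimes> \<one>" using hc by simp
      ultimately show ?thesis using H1 by blast
    qed
  next
    case (inv h)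
    have hc: "h \<in> carrier G" using inv Ysub by auto
    show ?case
    proof (cases "h \<in> S")
      case True
      then have "inv h \<in> H" by (rule generate.inv)
      moreover have "inv h = \<one> \<otimes> inv h" using hc by simp
      ultimately show ?thesis using N1 by blast
    next
      case False
      then have "h \<in> N" using YSN inv by auto
      then have "inv h \<in> N" using subgroup.m_inv_closed[OF Nsg] by auto
      moreover have "inv h = inv h \<otimes> \<one>" using hc by simp
      ultimately show ?thesis using H1 by blast
    qed
  next
    case (eng h1 h2)
    from eng.IH(1) obtain n1 s1 where a1: "n1\<in>N" "s1\<in>H" "h1 = n1 \<otimes> s1" by blast
    from eng.IH(2) obtain n2 s2 where a2: "n2\<in>N" "s2\<in>H" "h2 = n2 \<otimes> s2" by blast
    have c: "n1 \<in> carrier G" "s1 \<in> carrier G" "n2 \<in> carrier G" "s2 \<in> carrier G"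
      using a1 a2 subgroup.mem_carrier[OF Nsg] subgroup.mem_carrier[OF Hsg] by auto
    have "s1 \<otimes> n2 \<otimes> inv s1 \<in> N" using Nn a2(1) c(2) normal_inv_iff by blast
    then have "n1 \<otimes> (s1 \<otimes> n2 \<otimes> inv s1) \<in> N" using a1(1) subgroup.m_closed[OF Nsg] by auto
    moreover have "s1 \<otimes> s2 \<in> H" using a1(2) a2(2) subgroup.m_closed[OF Hsg] by auto
    moreover have "h1 \<otimes> h2 = (n1 \<otimes> (s1 \<otimes> n2 \<otimes> inv s1)) \<otimes> (s1 \<otimes> s2)"
      using a1(3) a2(3) c by (simp add: m_assoc inv_solve_left)
    ultimately show ?case by blast
  qed
qed

lemma Nsub: "N \<subseteq> carrier G" using subgroup.subset[OF Nsg] .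

lemma ex1: assumes "x \<in> carrier G" shows "\<exists>!s. s \<in> H \<and> rhoS G Y S s = rhoS G Y S x"
proof -
  obtain n s where a: "n\<in>N" "s\<in>H" "x = n \<otimes> s" using decomp assms by blast
  have c: "n \<in> carrier G" "s \<in> carrier G"
      using a subgroup.mem_carrier[OF Nsg] subgroup.mem_carrier[OF Hsg] by auto
  have "N #> x = (N #> n) #> s" using coset_mult_assoc[OF Nsub c] a(3) by simp
  also have "N #> n = N" using coset_join2[OF c(1) Nsg a(1)] .
  finally have e: "N #> x = N #> s" .
  show ?thesis
  proof
    show "s \<in> H \<and> rhoS G Y S s = rhoS G Y S x" using a e unfolding rhoS_def by auto
  next
    fix t assume "t \<in> H \<and> rhoS G Y S t = rhoS G Y S x"
    then have "t \<in> H" "N #> t = N #> s" using e unfolding rhoS_def by auto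
    then show "t = s" using inj_onD[OF inj _ _ a(2)] by auto
  qed
qed

lemma Hsub: "H \<subseteq> carrier G" using subgroup.subset[OF Hsg] .

lemma r_prop: assumes "x \<in> carrier G"
  shows "retr G Y S x \<in> H" "N #> retr G Y S x = N #> x"
  using theI'[OF ex1[OF assms]] unfolding retr_def rhoS_def by auto

lemma r_car: "x \<in> carrier G \<Longrightarrow> retr G Y S x \<in> carrier G"
  using r_prop(1) Hsub by auto

lemma r_uniq: assumes "s \<in> H" "N #> s = N #> x" "x \<in> carrier G"
  shows "retr G Y S x = s"
proof -
  have "s \<in> H \<and> rhoS G Y S s = rhoS G Y S x" using assms unfolding rhoS_def by auto
  then show ?thesis using the1_equality[OF ex1[OF assms(3)]] unfolding retr_def by auto
qed

lemma r_hom: "retr G Y S \<in> hom G G"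
proof (rule homI)
  fix x assume "x \<in> carrier G"
  then show "retr G Y S x \<in> carrier G" by (rule r_car)
next
  fix x y assume x: "x \<in> carrier G" and y: "y \<in> carrier G"
  have c: "retr G Y S x \<in> carrier G" "retr G Y S y \<in> carrier G"
    using r_car x y by auto
  have "N #> (retr G Y S x \<otimes> retr G Y S y) = (N #> retr G Y S x) <#> (N #> retr G Y S y)"
    using normal.rcos_sum[OF Nn c] by simp
  also have "\<dots> = (N #> x) <#> (N #> y)" using r_prop(2) x y by simp
  also have "\<dots> = N #> (x \<otimes> y)" using normal.rcos_sum[OF Nn x y] .
  finally have e: "N #> (retr G Y S x \<otimes> retr G Y S y) = N #> (x \<otimes> y)" .
  have "retr G Y S x \<otimes> retr G Y S y \<in> H"
    using subgroup.m_closed[OF Hsg r_prop(1)[OF x] r_prop(1)[OF y]] .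
  then show "retr G Y S (x \<otimes> y) = retr G Y S x \<otimes> retr G Y S y"
    by (rule r_uniq[OF _ e m_closed[OF x y]])
qed

lemma r_id: "s \<in> H \<Longrightarrow> retr G Y S s = s"
  by (rule r_uniq) (use Hsub in auto)

lemma r_kill: assumes "y \<in> Y" "y \<notin> S" shows "retr G Y S y = \<one>"
proof -
  have yN: "y \<in> N" using YSN assms by auto
  have yc: "y \<in> carrier G" using assms Ysub by auto
  have "N #> y = N" using coset_join2[OF yc Nsg yN] .
  also have "N = N #> \<one>" using coset_mult_one[OF Nsub] by simp
  finally show ?thesis by (intro r_uniq[OF H1 _ yc]) simp
qed

lemma r_rho: assumes "x \<in> carrier G" "z \<in> carrier G" "rhoS G Y S x = rhoS G Y S z"
  shows "retr G Y S x = retr G Y S z"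
  using assms unfolding retr_def by simp

end




lemma (in group) comm_inv_right:
  assumes "c \<in> carrier G" "x \<in> carrier G" "c \<otimes> x = x \<otimes> c"
  shows "c \<otimes> inv x = inv x \<otimes> c"
proof -
  have "inv x \<otimes> c = inv x \<otimes> ((c \<otimes> x) \<otimes> inv x)" using assms(1,2) by (simp add: m_assoc)
  also have "\<dots> = inv x \<otimes> ((x \<otimes> c) \<otimes> inv x)" using assms by simp
  also have "\<dots> = ((inv x \<otimes> x) \<otimes> c) \<otimes> inv x" using assms by (simp only: m_assoc inv_closed m_closed)
  also have "\<dots> = c \<otimes> inv x" using assms by simp
  finally show ?thesis by simp
qed

lemma (in group) gen_comm1:
  assumes XX: "XX \<subseteq> carrier G" and c: "c \<in> carrier G"
    and cx: "\<And>x. x \<in> XX \<Longrightarrow> c \<otimes> x = x \<otimes> c" and a: "a \<in> generate G XX"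
  shows "c \<otimes> a = a \<otimes> c"
  using a
proof (induction rule: generate.induct)
  case one then show ?case using c by simp
next
  case (incl h) then show ?case using cx by simp
next
  case (inv h) then show ?case using comm_inv_right[OF c _ cx] XX by auto
next
  case (eng h1 h2)
  have h: "h1 \<in> carrier G" "h2 \<in> carrier G" using eng.hyps generate_in_carrier[OF XX] by auto
  have "c \<otimes> (h1 \<otimes> h2) = (c \<otimes> h1) \<otimes> h2" using h c by (simp add: m_assoc)
  also have "\<dots> = h1 \<otimes> (c \<otimes> h2)" using eng.IH h c by (simp add: m_assoc)
  also have "\<dots> = (h1 \<otimes> h2) \<otimes> c" using eng.IH h c by (simp add: m_assoc)
  finally show ?case .
qed

lemma (in group) gen_comm:
  assumes XX: "XX \<subseteq> carrier G" and xy: "\<And>x y. x \<in> XX \<Longrightarrow> y \<in> XX \<Longrightarrow> x \<otimes> y = y \<otimes> x"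
    and a: "a \<in> generate G XX" and b: "b \<in> generate G XX"
  shows "a \<otimes> b = b \<otimes> a"
proof -
  have ac: "a \<in> carrier G" using a generate_in_carrier[OF XX] by auto
  have "\<And>x. x \<in> XX \<Longrightarrow> x \<otimes> a = a \<otimes> x"
    using gen_comm1[OF XX _ _ a] xy XX by blast
  then have "\<And>x. x \<in> XX \<Longrightarrow> a \<otimes> x = x \<otimes> a" by metis
  then show ?thesis using gen_comm1[OF XX ac _ b] by blast
qed

lemma (in group) gen_conj:
  assumes XX: "XX \<subseteq> carrier G" and D: "D \<subseteq> carrier G"
    and c1: "\<And>x h. x \<in> XX \<Longrightarrow> h \<in> D \<Longrightarrow> x \<otimes> h \<otimes> inv x \<in> D"
    and c2: "\<And>x h. x \<in> XX \<Longrightarrow> h \<in> D \<Longrightarrow> inv x \<otimes> h \<otimes> x \<in> D"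
    and g: "g \<in> generate G XX"
  shows "\<And>h. h \<in> D \<Longrightarrow> g \<otimes> h \<otimes> inv g \<in> D"
  using g
proof (induction rule: generate.induct)
  case one then show ?case using D by auto
next
  case (incl x) then show ?case using c1 by auto
next
  case (inv x) then show ?case using c2 XX by auto
next
  case (eng g1 g2)
  have gc: "g1 \<in> carrier G" "g2 \<in> carrier G" using eng.hyps generate_in_carrier[OF XX] by auto
  have hc: "h \<in> carrier G" using eng.prems D by auto
  have "g1 \<otimes> g2 \<otimes> h \<otimes> inv (g1 \<otimes> g2) = g1 \<otimes> (g2 \<otimes> h \<otimes> inv g2) \<otimes> inv g1"
    using gc hc by (simp add: inv_mult_group m_assoc)
  moreover have "g2 \<otimes> h \<otimes> inv g2 \<in> D" using eng.IH(2) eng.prems .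
  ultimately show ?case using eng.IH(1) by simp
qed

lemma (in group) comm_of_commutator:
  assumes a: "a \<in> carrier G" and b: "b \<in> carrier G" and c: "commutator G a b = \<one>"
  shows "a \<otimes> b = b \<otimes> a"
proof -
  have "(inv a \<otimes> inv b) \<otimes> (a \<otimes> b) = \<one>" using c a b unfolding commutator_def by (simp add: m_assoc)
  then have "inv (a \<otimes> b) = inv a \<otimes> inv b" using a b by (intro inv_equality) auto
  also have "\<dots> = inv (b \<otimes> a)" using a b by (simp add: inv_mult_group)
  finally show ?thesis using a b by (metis inv_inv m_closed)
qed




locale core = group G for G (structure) +
  fixes Y :: "'a set" and SS :: "'a set set" and r :: "'a set \<Rightarrow> 'a \<Rightarrow> 'a"
  assumes Ysub: "Y \<subseteq> carrier G" and gen: "generate G Y = carrier G" and fin: "finite SS"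
    and SsubY: "\<And>S. S \<in> SS \<Longrightarrow> S \<subseteq> Y" and un: "\<Union>SS = Y"
    and rhom: "\<And>S. S \<in> SS \<Longrightarrow> r S \<in> hom G G"
    and rid: "\<And>S s. S \<in> SS \<Longrightarrow> s \<in> generate G S \<Longrightarrow> r S s = s"
    and rkill: "\<And>S y. S \<in> SS \<Longrightarrow> y \<in> Y \<Longrightarrow> y \<notin> S \<Longrightarrow> r S y = \<one>"
    and c1: "\<And>a b. a \<in> Y \<Longrightarrow> b \<in> Y \<Longrightarrow> transverse {a, b} SS \<Longrightarrow> a \<otimes> b = b \<otimes> a"
    and c2: "\<And>S a h. S \<in> SS \<Longrightarrow> a \<in> Y \<Longrightarrow> a \<notin> S \<Longrightarrow> h \<in> derived G (generate G S) \<Longrightarrow> a \<otimes> h = h \<otimes> a"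
begin

lemma Scar: "S \<in> SS \<Longrightarrow> S \<subseteq> carrier G" using SsubY Ysub by blast

lemma rgh: "S \<in> SS \<Longrightarrow> group_hom G G (r S)"
  by (rule group_hom.intro[OF is_group is_group]) (rule group_hom_axioms.intro, rule rhom)

lemma rcar: "S \<in> SS \<Longrightarrow> x \<in> carrier G \<Longrightarrow> r S x \<in> carrier G"
  by (rule group_hom.hom_closed[OF rgh])

lemma rmul: "S \<in> SS \<Longrightarrow> x \<in> carrier G \<Longrightarrow> y \<in> carrier G \<Longrightarrow> r S (x \<otimes> y) = r S x \<otimes> r S y"
  by (rule hom_mult[OF rhom])

lemma rinv: "S \<in> SS \<Longrightarrow> x \<in> carrier G \<Longrightarrow> r S (inv x) = inv (r S x)"
  by (rule group_hom.hom_inv[OF rgh])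

lemma rone: "S \<in> SS \<Longrightarrow> r S \<one> = \<one>"
  by (rule group_hom.hom_one[OF rgh])

lemma rY: "S \<in> SS \<Longrightarrow> y \<in> Y \<Longrightarrow> y \<in> S \<Longrightarrow> r S y = y"
  by (rule rid) (auto intro: generate.incl)

definition D :: "'a set \<Rightarrow> 'a set" where "D S = derived G (generate G S)"

lemma gsg: "S \<in> SS \<Longrightarrow> subgroup (generate G S) G"
  by (rule generate_is_subgroup[OF Scar])

lemma Dsg: "S \<in> SS \<Longrightarrow> subgroup (D S) G"
  unfolding D_def by (rule derived_is_subgroup[OF subgroup.subset[OF gsg]])

lemma Dsub: "S \<in> SS \<Longrightarrow> D S \<subseteq> carrier G"
  by (rule subgroup.subset[OF Dsg])

lemma Dgen: "S \<in> SS \<Longrightarrow> D S \<subseteq> generate G S"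
  unfolding D_def by (rule derived_incl[OF _ gsg]) auto

lemma Dconj_S:
  assumes S: "S \<in> SS" and s: "s \<in> generate G S" and h: "h \<in> D S"
  shows "s \<otimes> h \<otimes> inv s \<in> D S"
proof -
  have n: "D S \<lhd> G\<lparr>carrier := generate G S\<rparr>"
    unfolding D_def using derived_subgroup_is_normal[OF gsg[OF S]] .
  have gr: "group (G\<lparr>carrier := generate G S\<rparr>)" using subgroup_imp_group[OF gsg[OF S]] .
  have "s \<otimes>\<^bsub>G\<lparr>carrier := generate G S\<rparr>\<^esub> h \<otimes>\<^bsub>G\<lparr>carrier := generate G S\<rparr>\<^esub> inv\<^bsub>G\<lparr>carrier := generate G S\<rparr>\<^esub> s \<in> D S"
    using group.normal_inv_iff[OF gr, of "D S"] n s h by simp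
  then show ?thesis using m_inv_consistent[OF gsg[OF S] s] by simp
qed

lemma Dnormal: assumes S: "S \<in> SS" shows "D S \<lhd> G"
proof (rule normal_invI[OF Dsg[OF S]])
  fix x h assume x: "x \<in> carrier G" and h: "h \<in> D S"
  have xg: "x \<in> generate G Y" using x gen by simp
  show "x \<otimes> h \<otimes> inv x \<in> D S"
  proof (rule gen_conj[OF Ysub Dsub[OF S] _ _ xg h])
    fix y k assume y: "y \<in> Y" and k: "k \<in> D S"
    have yc: "y \<in> carrier G" and kc: "k \<in> carrier G" using y Ysub k Dsub[OF S] by auto
    show "y \<otimes> k \<otimes> inv y \<in> D S"
    proof (cases "y \<in> S")
      case True
      from Dconj_S[OF S generate.incl[OF True] k] show ?thesis .
    next
      case False
      then have "y \<otimes> k = k \<otimes> y" using c2[OF S y False] k unfolding D_def by blast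
      then have "y \<otimes> k \<otimes> inv y = k" using yc kc by (simp add: m_assoc)
      then show ?thesis using k by simp
    qed
    show "inv y \<otimes> k \<otimes> y \<in> D S"
    proof (cases "y \<in> S")
      case True
      then have "inv y \<in> generate G S" by (rule generate.inv)
      from Dconj_S[OF S this k] show ?thesis using yc by (simp add: inv_inv)
    next
      case False
      then have "y \<otimes> k = k \<otimes> y" using c2[OF S y False] k unfolding D_def by blast
      then have "inv y \<otimes> k \<otimes> y = inv y \<otimes> (y \<otimes> k)" using yc kc by (simp add: m_assoc)
      also have "\<dots> = k" using yc kc by (simp add: m_assoc[symmetric])
      finally have "inv y \<otimes> k \<otimes> y = k" .
      then show ?thesis using k by simp
    qed
  qed
qed

end



context core
begin

lemma r_gen: assumes S: "S \<in> SS" and T: "T \<in> SS" shows "r S ` generate G T \<subseteq> generate G T"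
proof -
  have img: "r S ` generate G T = generate G (r S ` T)"
    using group_hom.generate_img[OF rgh[OF S] Scar[OF T]] by simp
  have "r S ` T \<subseteq> generate G T"
  proof
    fix z assume "z \<in> r S ` T"
    then obtain t where t: "t \<in> T" "z = r S t" by blast
    have tY: "t \<in> Y" using t SsubY[OF T] by auto
    show "z \<in> generate G T"
    proof (cases "t \<in> S")
      case True
      then have "z = t" using t rY[OF S tY] by simp
      then show ?thesis using t generate.incl by metis
    next
      case False
      then have "z = \<one>" using t rkill[OF S tY] by simp
      then show ?thesis using generate.one by metis
    qed
  qed
  then have "generate G (r S ` T) \<subseteq> generate G T"
    by (rule generate_subgroup_incl[OF _ gsg[OF T]])
  then show ?thesis using img by simp
qed

lemma rD: assumes S: "S \<in> SS" and T: "T \<in> SS" shows "r S ` D T \<subseteq> D T"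
proof -
  have "r S ` D T = derived G (r S ` generate G T)"
    unfolding D_def using group_hom.derived_img[OF rgh[OF S] subgroup.subset[OF gsg[OF T]]] by simp
  also have "\<dots> \<subseteq> derived G (generate G T)" by (rule mono_derived[OF r_gen[OF S T]])
  finally show ?thesis unfolding D_def .
qed

definition MM :: "'a set set \<Rightarrow> 'a set" where "MM TT = generate G (\<Union>T\<in>TT. D T)"

lemma UDsub: "TT \<subseteq> SS \<Longrightarrow> (\<Union>T\<in>TT. D T) \<subseteq> carrier G"
  using Dsub by blast

lemma Msg: "TT \<subseteq> SS \<Longrightarrow> subgroup (MM TT) G"
  unfolding MM_def by (rule generate_is_subgroup[OF UDsub])

lemma Msub: "TT \<subseteq> SS \<Longrightarrow> MM TT \<subseteq> carrier G"
  by (rule subgroup.subset[OF Msg])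

lemma Mnormal: assumes TT: "TT \<subseteq> SS" shows "MM TT \<lhd> G"
  unfolding MM_def
proof (rule normal_generateI[OF UDsub[OF TT]])
  fix h g assume h: "h \<in> (\<Union>T\<in>TT. D T)" and g: "g \<in> carrier G"
  then obtain T where T: "T \<in> TT" "h \<in> D T" by blast
  have "g \<otimes> h \<otimes> inv g \<in> D T" using Dnormal[of T] T TT g normal_inv_iff by blast
  then show "g \<otimes> h \<otimes> inv g \<in> (\<Union>T\<in>TT. D T)" using T by blast
qed

lemma rM: assumes S: "S \<in> SS" and TT: "TT \<subseteq> SS" shows "r S ` MM TT \<subseteq> MM TT"
proof -
  have "r S ` MM TT = generate G (r S ` (\<Union>T\<in>TT. D T))"
    unfolding MM_def using group_hom.generate_img[OF rgh[OF S] UDsub[OF TT]] by simp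
  also have "\<dots> \<subseteq> MM TT" unfolding MM_def
  proof (rule mono_generate)
    show "r S ` (\<Union>T\<in>TT. D T) \<subseteq> (\<Union>T\<in>TT. D T)"
      using rD[OF S] TT by blast
  qed
  finally show ?thesis .
qed

lemma decompM:
  assumes S: "S \<in> SS" and TT: "TT \<subseteq> SS" and g: "g \<in> MM (insert S TT)"
  shows "\<exists>d\<in>D S. \<exists>m\<in>MM TT. g = d \<otimes> m"
  using g unfolding MM_def[of "insert S TT"]
proof (induction rule: generate.induct)
  case one
  have "\<one> = \<one> \<otimes> \<one>" by simp
  then show ?case using subgroup.one_closed[OF Dsg[OF S]] subgroup.one_closed[OF Msg[OF TT]] by blast
next
  case (incl h)
  show ?case
  proof (cases "h \<in> D S")
    case True
    have "h = h \<otimes> \<one>" using True Dsub[OF S] by auto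
    then show ?thesis using True subgroup.one_closed[OF Msg[OF TT]] by blast
  next
    case False
    then have "h \<in> (\<Union>T\<in>TT. D T)" using incl by blast
    then have hm: "h \<in> MM TT" unfolding MM_def by (rule generate.incl)
    have "h = \<one> \<otimes> h" using hm Msub[OF TT] by auto
    then show ?thesis using hm subgroup.one_closed[OF Dsg[OF S]] by blast
  qed
next
  case (inv h)
  show ?case
  proof (cases "h \<in> D S")
    case True
    then have hi: "inv h \<in> D S" by (rule subgroup.m_inv_closed[OF Dsg[OF S]])
    have "inv h = inv h \<otimes> \<one>" using hi Dsub[OF S] by auto
    then show ?thesis using hi subgroup.one_closed[OF Msg[OF TT]] by blast
  next
    case False
    then have "h \<in> (\<Union>T\<in>TT. D T)" using inv by blast
    then have hm: "inv h \<in> MM TT" unfolding MM_def by (rule generate.inv)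
    have "inv h = \<one> \<otimes> inv h" using hm Msub[OF TT] by auto
    then show ?thesis using hm subgroup.one_closed[OF Dsg[OF S]] by blast
  qed
next
  case (eng h1 h2)
  from eng.IH(1) obtain d1 m1 where a1: "d1 \<in> D S" "m1 \<in> MM TT" "h1 = d1 \<otimes> m1" by blast
  from eng.IH(2) obtain d2 m2 where a2: "d2 \<in> D S" "m2 \<in> MM TT" "h2 = d2 \<otimes> m2" by blast
  have c: "d1 \<in> carrier G" "m1 \<in> carrier G" "d2 \<in> carrier G" "m2 \<in> carrier G"
    using a1 a2 Dsub[OF S] Msub[OF TT] by auto
  have "inv d2 \<otimes> m1 \<otimes> inv (inv d2) \<in> MM TT"
    using Mnormal[OF TT] a1(2) c(3) normal_inv_iff inv_closed by blast
  then have "inv d2 \<otimes> m1 \<otimes> d2 \<in> MM TT" using c by simp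
  then have "(inv d2 \<otimes> m1 \<otimes> d2) \<otimes> m2 \<in> MM TT" using a2(2) subgroup.m_closed[OF Msg[OF TT]] by blast
  moreover have "d1 \<otimes> d2 \<in> D S" using a1(1) a2(1) subgroup.m_closed[OF Dsg[OF S]] by blast
  moreover have "h1 \<otimes> h2 = (d1 \<otimes> d2) \<otimes> ((inv d2 \<otimes> m1 \<otimes> d2) \<otimes> m2)"
  proof -
    have e: "d1 \<otimes> d2 \<otimes> inv d2 = d1" using c by (simp add: m_assoc)
    show ?thesis using a1(3) a2(3) c by (simp add: m_assoc[symmetric] e)
  qed
  ultimately show ?case by blast
qed

lemma peel:
  assumes "finite TT" "TT \<subseteq> SS"
  shows "g \<in> MM TT \<Longrightarrow> (\<forall>S\<in>TT. r S g = \<one>) \<Longrightarrow> g = \<one>"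
  using assms
proof (induction TT arbitrary: g rule: finite_induct)
  case empty
  then show ?case unfolding MM_def using generate_empty by simp
next
  case (insert S TT)
  have S: "S \<in> SS" and TT: "TT \<subseteq> SS" using insert.prems by auto
  obtain d m where a: "d \<in> D S" "m \<in> MM TT" "g = d \<otimes> m" using decompM[OF S TT insert.prems(1)] by blast
  have c: "d \<in> carrier G" "m \<in> carrier G" using a Dsub[OF S] Msub[OF TT] by auto
  have rm: "r S m \<in> MM TT" using rM[OF S TT] a(2) by blast
  have rmc: "r S m \<in> carrier G" using rcar[OF S c(2)] .
  have "r S d = d" using rid[OF S] Dgen[OF S] a(1) by blast
  then have "d \<otimes> r S m = \<one>" using insert.prems(2) a(3) rmul[OF S c] by simp
  then have "d = inv (r S m)" using c rmc by (metis inv_equality inv_inv inv_closed)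
  then have "d \<in> MM TT" using rm subgroup.m_inv_closed[OF Msg[OF TT]] by simp
  then have "g \<in> MM TT" using a subgroup.m_closed[OF Msg[OF TT]] by simp
  then show ?case using insert.IH[OF _ _ TT] insert.prems(2) by blast
qed

end



fun Fr :: "('a, 'b) monoid_scheme \<Rightarrow> ('a set \<Rightarrow> 'a \<Rightarrow> 'a) \<Rightarrow> 'a set list \<Rightarrow> 'a \<Rightarrow> 'a" where
  "Fr G r [] x = x"
| "Fr G r (S # Ss) x = Fr G r Ss x \<otimes>\<^bsub>G\<^esub> inv\<^bsub>G\<^esub> (r S (Fr G r Ss x))"

context core
begin

abbreviation Q where "Q \<equiv> G Mod MM SS"

lemma Mn: "MM SS \<lhd> G" by (rule Mnormal) simp
lemma Msg': "subgroup (MM SS) G" by (rule Msg) simp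
lemma Msub': "MM SS \<subseteq> carrier G" by (rule Msub) simp

lemma Qgrp: "group Q" by (rule normal.factorgroup_is_group[OF Mn])

lemma pigh: "group_hom G Q (\<lambda>x. MM SS #> x)"
  by (rule group_hom.intro[OF is_group Qgrp]) (rule group_hom_axioms.intro, rule normal.r_coset_hom_Mod[OF Mn])

lemma pi_mul: "x \<in> carrier G \<Longrightarrow> y \<in> carrier G \<Longrightarrow> MM SS #> (x \<otimes> y) = (MM SS #> x) \<otimes>\<^bsub>Q\<^esub> (MM SS #> y)"
  by (rule group_hom.hom_mult[OF pigh])

lemma pi_inv: "x \<in> carrier G \<Longrightarrow> MM SS #> (inv x) = inv\<^bsub>Q\<^esub> (MM SS #> x)"
  by (rule group_hom.hom_inv[OF pigh])

lemma pi_car: "x \<in> carrier G \<Longrightarrow> MM SS #> x \<in> carrier Q"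
  by (rule group_hom.hom_closed[OF pigh])

lemma Qone: "\<one>\<^bsub>Q\<^esub> = MM SS" by simp

lemma pi_eq:
  assumes x: "x \<in> carrier G" and z: "z \<in> carrier G"
  shows "(MM SS #> x = MM SS #> z) \<longleftrightarrow> x \<otimes> inv z \<in> MM SS"
proof
  assume e: "MM SS #> x = MM SS #> z"
  have "x \<in> MM SS #> z" using rcos_self[OF x Msg'] e by simp
  then show "x \<otimes> inv z \<in> MM SS" by (rule subgroup.rcos_module_imp[OF Msg' is_group z])
next
  assume "x \<otimes> inv z \<in> MM SS"
  then have "x \<in> MM SS #> z" by (rule subgroup.rcos_module_rev[OF Msg' is_group z x])
  then show "MM SS #> x = MM SS #> z" using repr_independence[OF _ z Msg'] by simp
qed

lemma pi_one_iff: "x \<in> carrier G \<Longrightarrow> (MM SS #> x = MM SS) \<longleftrightarrow> x \<in> MM SS"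
  using pi_eq[of x \<one>] coset_mult_one[OF Msub'] by simp

lemma commY:
  assumes a: "a \<in> Y" and b: "b \<in> Y"
  shows "MM SS #> (a \<otimes> b) = MM SS #> (b \<otimes> a)"
proof (cases "transverse {a, b} SS")
  case True
  then show ?thesis using c1[OF a b] by simp
next
  case False
  then obtain S where S: "S \<in> SS" "{a, b} \<subseteq> S" unfolding transverse_def by blast
  have ac: "a \<in> carrier G" and bc: "b \<in> carrier G" using a b Ysub by auto
  have ag: "a \<in> generate G S" using S(2) by (intro generate.incl) simp
  have bg: "b \<in> generate G S" using S(2) by (intro generate.incl) simp
  have "a \<otimes> b \<otimes> inv a \<otimes> inv b \<in> derived_set G (generate G S)" by (rule UN_I[OF ag], rule UN_I[OF bg]) simp
  then have "a \<otimes> b \<otimes> inv a \<otimes> inv b \<in> D S" unfolding D_def derived_def by (rule generate.incl)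
  then have "a \<otimes> b \<otimes> inv a \<otimes> inv b \<in> (\<Union>T\<in>SS. D T)" by (rule UN_I[OF S(1)])
  then have "a \<otimes> b \<otimes> inv a \<otimes> inv b \<in> MM SS" unfolding MM_def by (rule generate.incl)
  moreover have "(a \<otimes> b) \<otimes> inv (b \<otimes> a) = a \<otimes> b \<otimes> inv a \<otimes> inv b"
    using ac bc by (simp add: inv_mult_group m_assoc)
  ultimately show ?thesis using pi_eq[OF m_closed[OF ac bc] m_closed[OF bc ac]] by simp
qed

lemma Qcomm: "comm_group Q"
proof (rule group.group_comm_groupI[OF Qgrp])
  let ?p = "\<lambda>x. MM SS #> x"
  have XX: "?p ` Y \<subseteq> carrier Q"
  proof (rule image_subsetI)
    fix y assume "y \<in> Y" then show "?p y \<in> carrier Q" using Ysub pi_car by auto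
  qed
  have "generate Q (?p ` Y) = ?p ` generate G Y"
    by (rule group_hom.generate_img[OF pigh Ysub])
  also have "\<dots> = carrier Q" using gen carrier_FactGroup[of G "MM SS"] by simp
  finally have gQ: "generate Q (?p ` Y) = carrier Q" .
  have xy: "\<And>u v. u \<in> ?p ` Y \<Longrightarrow> v \<in> ?p ` Y \<Longrightarrow> u \<otimes>\<^bsub>Q\<^esub> v = v \<otimes>\<^bsub>Q\<^esub> u"
  proof -
    fix u v assume "u \<in> ?p ` Y" "v \<in> ?p ` Y"
    then obtain a b where ab: "a \<in> Y" "b \<in> Y" "u = ?p a" "v = ?p b" by blast
    have ac: "a \<in> carrier G" and bc: "b \<in> carrier G" using ab Ysub by auto
    show "u \<otimes>\<^bsub>Q\<^esub> v = v \<otimes>\<^bsub>Q\<^esub> u"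
      using ab commY[OF ab(1,2)] pi_mul[OF ac bc] pi_mul[OF bc ac] by simp
  qed
  fix u v assume u: "u \<in> carrier Q" and v: "v \<in> carrier Q"
  show "u \<otimes>\<^bsub>Q\<^esub> v = v \<otimes>\<^bsub>Q\<^esub> u"
    by (rule group.gen_comm[OF Qgrp XX xy]) (simp_all only: gQ u v)
qed

end



lemma comm4:
  assumes "comm_group H" "A \<in> carrier H" "B \<in> carrier H" "C \<in> carrier H" "E \<in> carrier H"
  shows "(A \<otimes>\<^bsub>H\<^esub> B) \<otimes>\<^bsub>H\<^esub> inv\<^bsub>H\<^esub> (C \<otimes>\<^bsub>H\<^esub> E) = (A \<otimes>\<^bsub>H\<^esub> inv\<^bsub>H\<^esub> C) \<otimes>\<^bsub>H\<^esub> (B \<otimes>\<^bsub>H\<^esub> inv\<^bsub>H\<^esub> E)"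
proof -
  interpret H: comm_group H by (rule assms(1))
  show ?thesis using assms(2-) by (simp add: H.inv_mult H.m_ac)
qed

context core
begin

lemma Fcar: "set Ss \<subseteq> SS \<Longrightarrow> x \<in> carrier G \<Longrightarrow> Fr G r Ss x \<in> carrier G"
proof (induction Ss)
  case Nil then show ?case by simp
next
  case (Cons S Ss)
  then have S: "S \<in> SS" and c: "Fr G r Ss x \<in> carrier G" by auto
  show ?case using rcar[OF S c] c by simp
qed

lemma Fone: "set Ss \<subseteq> SS \<Longrightarrow> Fr G r Ss \<one> = \<one>"
proof (induction Ss)
  case Nil then show ?case by simp
next
  case (Cons S Ss)
  then have S: "S \<in> SS" and c: "Fr G r Ss \<one> = \<one>" by auto
  show ?case using rone[OF S] c by simp
qed

lemma FY: "set Ss \<subseteq> SS \<Longrightarrow> y \<in> Y \<Longrightarrow> (Fr G r Ss y = y \<or> Fr G r Ss y = \<one>) \<and> (y \<in> \<Union>(set Ss) \<longrightarrow> Fr G r Ss y = \<one>)"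
proof (induction Ss)
  case Nil then show ?case by simp
next
  case (Cons S Ss)
  then have S: "S \<in> SS" and IH: "(Fr G r Ss y = y \<or> Fr G r Ss y = \<one>) \<and> (y \<in> \<Union>(set Ss) \<longrightarrow> Fr G r Ss y = \<one>)" by auto
  have yc: "y \<in> carrier G" using Cons.prems Ysub by auto
  have f1: "\<one> \<otimes> inv (r S \<one>) = \<one>" using rone[OF S] by simp
  show ?case
  proof (cases "y \<in> S")
    case True
    have "y \<otimes> inv (r S y) = \<one>" using rY[OF S Cons.prems(2) True] yc by simp
    then show ?thesis using IH f1 by auto
  next
    case False
    have "y \<otimes> inv (r S y) = y" using rkill[OF S Cons.prems(2) False] yc by simp
    then show ?thesis using IH f1 False by auto
  qed
qed

lemma Ffix: "set Ss \<subseteq> SS \<Longrightarrow> g \<in> carrier G \<Longrightarrow> \<forall>S\<in>set Ss. r S g = \<one> \<Longrightarrow> Fr G r Ss g = g"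
  by (induction Ss) (auto)

lemma rpi:
  assumes S: "S \<in> SS" and x: "x \<in> carrier G" and z: "z \<in> carrier G" and e: "MM SS #> x = MM SS #> z"
  shows "MM SS #> (r S x) = MM SS #> (r S z)"
proof -
  have "x \<otimes> inv z \<in> MM SS" using pi_eq[OF x z] e by simp
  then have "r S (x \<otimes> inv z) \<in> MM SS" using rM[OF S] by blast
  then have "r S x \<otimes> inv (r S z) \<in> MM SS" using rmul[OF S x inv_closed[OF z]] rinv[OF S z] by simp
  then show ?thesis using pi_eq[OF rcar[OF S x] rcar[OF S z]] by simp
qed

lemma Fmul:
  assumes Ss: "set Ss \<subseteq> SS" and x: "x \<in> carrier G" and y: "y \<in> carrier G"
  shows "MM SS #> Fr G r Ss (x \<otimes> y) = (MM SS #> Fr G r Ss x) \<otimes>\<^bsub>Q\<^esub> (MM SS #> Fr G r Ss y)"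
  using Ss
proof (induction Ss)
  case Nil then show ?case using pi_mul[OF x y] by simp
next
  case (Cons S Ss)
  then have S: "S \<in> SS" and Ss: "set Ss \<subseteq> SS" by auto
  define a where "a = Fr G r Ss x"
  define b where "b = Fr G r Ss y"
  define c where "c = Fr G r Ss (x \<otimes> y)"
  have ac: "a \<in> carrier G" and bc: "b \<in> carrier G" and cc: "c \<in> carrier G"
    unfolding a_def b_def c_def using Fcar[OF Ss] x y by auto
  have rac: "r S a \<in> carrier G" and rbc: "r S b \<in> carrier G" and rcc: "r S c \<in> carrier G"
    using rcar[OF S] ac bc cc by auto
  have IH: "MM SS #> c = MM SS #> (a \<otimes> b)"
    using Cons.IH[OF Ss] pi_mul[OF ac bc] unfolding a_def b_def c_def by simp
  have rc: "MM SS #> r S c = (MM SS #> r S a) \<otimes>\<^bsub>Q\<^esub> (MM SS #> r S b)"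
    using rpi[OF S cc m_closed[OF ac bc] IH] rmul[OF S ac bc] pi_mul[OF rac rbc] by simp
  have A: "MM SS #> a \<in> carrier Q" and B: "MM SS #> b \<in> carrier Q"
    and RA: "MM SS #> r S a \<in> carrier Q" and RB: "MM SS #> r S b \<in> carrier Q"
    using pi_car ac bc rac rbc by auto
  have "MM SS #> Fr G r (S # Ss) (x \<otimes> y) = MM SS #> (c \<otimes> inv (r S c))"
    unfolding c_def by simp
  also have "\<dots> = (MM SS #> c) \<otimes>\<^bsub>Q\<^esub> inv\<^bsub>Q\<^esub> (MM SS #> r S c)"
    using pi_mul[OF cc inv_closed[OF rcc]] pi_inv[OF rcc] by simp
  also have "\<dots> = ((MM SS #> a) \<otimes>\<^bsub>Q\<^esub> (MM SS #> b)) \<otimes>\<^bsub>Q\<^esub>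
       inv\<^bsub>Q\<^esub> ((MM SS #> r S a) \<otimes>\<^bsub>Q\<^esub> (MM SS #> r S b))"
    using IH rc pi_mul[OF ac bc] by simp
  also have "\<dots> = ((MM SS #> a) \<otimes>\<^bsub>Q\<^esub> inv\<^bsub>Q\<^esub> (MM SS #> r S a)) \<otimes>\<^bsub>Q\<^esub>
       ((MM SS #> b) \<otimes>\<^bsub>Q\<^esub> inv\<^bsub>Q\<^esub> (MM SS #> r S b))"
    by (rule comm4[OF Qcomm A B RA RB])
  also have "\<dots> = (MM SS #> (a \<otimes> inv (r S a))) \<otimes>\<^bsub>Q\<^esub> (MM SS #> (b \<otimes> inv (r S b)))"
    using pi_mul[OF ac inv_closed[OF rac]] pi_inv[OF rac] pi_mul[OF bc inv_closed[OF rbc]] pi_inv[OF rbc] by simp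
  finally show ?case unfolding a_def b_def by simp
qed

lemma allpi:
  assumes Ls: "set Ls = SS" and x: "x \<in> generate G Y"
  shows "MM SS #> Fr G r Ls x = MM SS"
  using x
proof (induction rule: generate.induct)
  case one
  then show ?case using Fone[of Ls] Ls coset_mult_one[OF Msub'] by simp
next
  case (incl y)
  have "Fr G r Ls y = \<one>" using FY[of Ls y] Ls incl un by auto
  then show ?case using coset_mult_one[OF Msub'] by simp
next
  case (inv y)
  have yc: "y \<in> carrier G" using inv Ysub by auto
  have Fy: "Fr G r Ls y = \<one>" using FY[of Ls y] Ls inv un by auto
  have "(MM SS #> Fr G r Ls (inv y)) \<otimes>\<^bsub>Q\<^esub> (MM SS #> Fr G r Ls y) = MM SS #> Fr G r Ls (inv y \<otimes> y)"
    using Fmul[of Ls "inv y" y] Ls yc by simp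
  also have "\<dots> = MM SS" using Fone[of Ls] Ls yc coset_mult_one[OF Msub'] by simp
  finally have P: "(MM SS #> Fr G r Ls (inv y)) \<otimes>\<^bsub>Q\<^esub> (MM SS #> Fr G r Ls y) = MM SS" .
  have Fy': "MM SS #> Fr G r Ls y = \<one>\<^bsub>Q\<^esub>" using Fy coset_mult_one[OF Msub'] by simp
  have X: "MM SS #> Fr G r Ls (inv y) \<in> carrier Q" using pi_car Fcar[of Ls "inv y"] Ls yc by simp
  have "MM SS #> Fr G r Ls (inv y) = (MM SS #> Fr G r Ls (inv y)) \<otimes>\<^bsub>Q\<^esub> \<one>\<^bsub>Q\<^esub>"
    by (rule monoid.r_one[symmetric, OF group.is_monoid[OF Qgrp] X])
  also have "\<dots> = MM SS" using P Fy' by simp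
  finally show ?case .
next
  case (eng h1 h2)
  have c: "h1 \<in> carrier G" "h2 \<in> carrier G" using eng.hyps gen by auto
  have "MM SS #> Fr G r Ls (h1 \<otimes> h2) = (MM SS #> Fr G r Ls h1) \<otimes>\<^bsub>Q\<^esub> (MM SS #> Fr G r Ls h2)"
    using Fmul[of Ls h1 h2] Ls c by simp
  also have "\<dots> = \<one>\<^bsub>Q\<^esub> \<otimes>\<^bsub>Q\<^esub> \<one>\<^bsub>Q\<^esub>" using eng.IH by simp
  also have "\<dots> = \<one>\<^bsub>Q\<^esub>" by (rule monoid.l_one[OF group.is_monoid[OF Qgrp] monoid.one_closed[OF group.is_monoid[OF Qgrp]]])
  finally show ?case by simp
qed

theorem core_main:
  assumes g: "g \<in> carrier G" and k: "\<forall>S\<in>SS. r S g = \<one>"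
  shows "g = \<one>"
proof -
  obtain Ls where Ls: "set Ls = SS" using finite_list[OF fin] by blast
  have "MM SS #> Fr G r Ls g = MM SS" using allpi[OF Ls] g gen by simp
  moreover have "Fr G r Ls g = g" using Ffix[of Ls g] Ls g k by simp
  ultimately have "g \<in> MM SS" using pi_one_iff[OF g] by simp
  then show ?thesis using peel[OF fin subset_refl] k by blast
qed

end



theorem mainTheorem8:
  fixes G :: "('a, 'b) monoid_scheme" and Y :: "'a set" and \<S> :: "'a set set"
  assumes "group G"
    and "finite Y" and "Y \<subseteq> carrier G" and "generate G Y = carrier G"
    and "retractive_family G Y \<S>"
    and "\<Union>\<S> = Y"
    and "\<forall>S\<in>\<S>. \<forall>T\<in>\<S>. S \<subseteq> T \<longrightarrow> S = T"
    and "\<forall>a\<in>Y. \<forall>b\<in>Y. transverse {a, b} \<S> \<longrightarrow> commutator G a b = \<one>\<^bsub>G\<^esub>"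
    and "\<forall>S\<in>\<S>. \<forall>a\<in>Y - S. \<forall>h\<in>derived G (generate G S). commutator G a h = \<one>\<^bsub>G\<^esub>"
  shows "inj_on (rho_family G Y \<S>) (carrier G)"
proof -
  interpret group G by (rule assms(1))
  have SY: "\<And>S. S \<in> \<S> \<Longrightarrow> S \<subseteq> Y" using assms(5) unfolding retractive_family_def by blast
  have ret: "\<And>S. S \<in> \<S> \<Longrightarrow> retractive G Y S"
  proof -
    fix S assume S: "S \<in> \<S>"
    have "retractive G Y (\<Inter>{S})" using assms(5) S unfolding retractive_family_def by blast
    then show "retractive G Y S" by simp
  qed
  have rc: "\<And>S. S \<in> \<S> \<Longrightarrow> retr_ctx G Y S"
    by (rule retr_ctx.intro[OF assms(1) retr_ctx_axioms.intro[OF assms(3) assms(4)]]) (rule ret)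
  have fin: "finite \<S>"
  proof (rule finite_subset)
    show "\<S> \<subseteq> Pow Y" using SY by blast
    show "finite (Pow Y)" using assms(2) by simp
  qed
  have C: "core G Y \<S> (retr G Y)"
  proof (intro core.intro[OF assms(1)] core_axioms.intro)
    show "Y \<subseteq> carrier G" "generate G Y = carrier G" "finite \<S>" "\<Union>\<S> = Y"
      using assms(3,4,6) fin by auto
  next
    fix S assume "S \<in> \<S>" then show "S \<subseteq> Y" by (rule SY)
  next
    fix S assume "S \<in> \<S>" then show "retr G Y S \<in> hom G G" using rc retr_ctx.r_hom by metis
  next
    fix S s assume "S \<in> \<S>" "s \<in> generate G S" then show "retr G Y S s = s"
      using rc retr_ctx.r_id by metis
  next
    fix S y assume "S \<in> \<S>" "y \<in> Y" "y \<notin> S" then show "retr G Y S y = \<one>\<^bsub>G\<^esub>"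
      using rc retr_ctx.r_kill by metis
  next
    fix a b assume a: "a \<in> Y" and b: "b \<in> Y" and t: "transverse {a, b} \<S>"
    have "commutator G a b = \<one>\<^bsub>G\<^esub>" using assms(8) a b t by blast
    then show "a \<otimes>\<^bsub>G\<^esub> b = b \<otimes>\<^bsub>G\<^esub> a" using a b assms(3) by (intro comm_of_commutator) auto
  next
    fix S a h assume S: "S \<in> \<S>" and a: "a \<in> Y" and aS: "a \<notin> S" and h: "h \<in> derived G (generate G S)"
    have Sc: "S \<subseteq> carrier G" using SY[OF S] assms(3) by blast
    have hc: "h \<in> carrier G"
      using derived_in_carrier[OF subgroup.subset[OF generate_is_subgroup[OF Sc]]] h by blast
    have "commutator G a h = \<one>\<^bsub>G\<^esub>" using assms(9) S a aS h by blast
    then show "a \<otimes>\<^bsub>G\<^esub> h = h \<otimes>\<^bsub>G\<^esub> a" using a assms(3) hc by (intro comm_of_commutator) auto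
  qed
  show ?thesis
  proof (rule inj_onI)
    fix x z assume x: "x \<in> carrier G" and z: "z \<in> carrier G"
      and e: "rho_family G Y \<S> x = rho_family G Y \<S> z"
    have k: "\<forall>S\<in>\<S>. retr G Y S (x \<otimes>\<^bsub>G\<^esub> inv\<^bsub>G\<^esub> z) = \<one>\<^bsub>G\<^esub>"
    proof
      fix S assume S: "S \<in> \<S>"
      have "rhoS G Y S x = rhoS G Y S z" using fun_cong[OF e, of S] S unfolding rho_family_def by simp
      then have "retr G Y S x = retr G Y S z" using retr_ctx.r_rho[OF rc[OF S] x z] by simp
      then show "retr G Y S (x \<otimes>\<^bsub>G\<^esub> inv\<^bsub>G\<^esub> z) = \<one>\<^bsub>G\<^esub>"
        using core.rmul[OF C S x inv_closed[OF z]] core.rinv[OF C S z] core.rcar[OF C S z] by simp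
    qed
    have "x \<otimes>\<^bsub>G\<^esub> inv\<^bsub>G\<^esub> z = \<one>\<^bsub>G\<^esub>" by (rule core.core_main[OF C m_closed[OF x inv_closed[OF z]] k])
    then have "inv\<^bsub>G\<^esub> (inv\<^bsub>G\<^esub> z) = x" by (rule inv_equality[OF _ inv_closed[OF z] x])
    then show "x = z" using inv_inv[OF z] by simp
  qed
qed



end
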